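(* Let $f\colon\mathbb{R}\to\mathbb{R}$ be locally Lipschitz continuous and let $\phi_\pm\in\mathbb{R}$ with $\phi_-<0<\phi_+$. Suppose $f(\phi_+)=f(\phi_-)$ and $f(z)-f(\phi_\pm)<0$ for all $z\in(\phi_-,\phi_+)$. Then for each $\kappa\in(f(0),f(\phi_\pm))$ there exists a constant $R>0$ such that for every $\delta\in(0,\kappa-f(0))$ there exist $\tilde f\in C^\infty(\mathbb{R})$ and $\psi_\pm\in(\phi_-,\phi_+)$ with $\psi_-<0<\psi_+$ such that: (i) $\tilde f(\phi_+)=\tilde f(\phi_-)$, $\tilde f'(\phi_\pm)\neq0$, and $\tilde f(z)-\tilde f(\phi_\pm)<0$ for all $z\in(\phi_-,\phi_+)$; (ii) $\tilde f(\psi_+)=\kappa=\tilde f(\psi_-)$, $\tilde f'(\psi_\pm)\neq0$, and $\tilde f(z)-\tilde f(\psi_\pm)<0$ for all $z\in(\psi_-,\psi_+)$; (iii) $|f(z)-\tilde f(z)|<\delta$ and $|\tilde f'(z)|<R$ for all $z\in[\phi_-,\phi_+]$. *)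

theory Defs
  imports "HOL-Analysis.Analysis"
begin

definition locally_lipschitz :: "(real \<Rightarrow> real) \<Rightarrow> bool" where
  "locally_lipschitz f \<longleftrightarrow>
     (\<forall>x. \<exists>e>0. \<exists>L. \<forall>y\<in>ball x e. \<forall>z\<in>ball x e. \<bar>f y - f z\<bar> \<le> L * \<bar>y - z\<bar>)"

definition smooth :: "(real \<Rightarrow> real) \<Rightarrow> bool" where
  "smooth f \<longleftrightarrow> (\<forall>n. \<forall>x. ((deriv ^^ n) f) differentiable (at x))"

end

theory Submission imports Defs "HOL-Computational_Algebra.Polynomial" begin

lemma deriv_poly_iter: "(deriv ^^ n) (poly (p::real poly)) = poly ((pderiv ^^ n) p)"
proof (induction n)
  case 0 then show ?case by simp
next
  case (Suc n)
  have D: "deriv (poly q) = poly (pderiv q)" for q :: "real poly"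
    by (rule ext) (rule DERIV_imp_deriv[OF poly_DERIV])
  show ?case using Suc by (simp add: D)
qed

lemma smooth_poly: "smooth (poly (p :: real poly))"
  unfolding smooth_def deriv_poly_iter
  by (meson poly_DERIV real_differentiable_def)

lemma Bernstein_0: "Bernstein n k 0 = (if k = 0 then 1 else 0)"
  by (simp add: Bernstein_def)

lemma Bernstein_1: "k \<le> n \<Longrightarrow> Bernstein n k 1 = (if k = n then 1 else 0)"
  by (simp add: Bernstein_def)

lemma Bernstein_deriv:
  assumes "k \<le> Suc m"
  shows "((\<lambda>x. Bernstein (Suc m) k x) has_real_derivative
     real (Suc m) * ((if 1 \<le> k then Bernstein m (k-1) x else 0) - (if k \<le> m then Bernstein m k x else 0))) (at x)"
proof -
  have "k = 0 \<or> (\<exists>j. k = Suc j \<and> j < m) \<or> k = Suc m"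
    using assms by (cases k) auto
  then consider "k = 0" | j where "k = Suc j" "j < m" | "k = Suc m" by blast
  then show ?thesis
  proof cases
    case 1
    have "((\<lambda>x. (1 - x) ^ Suc m) has_real_derivative (1 + real m) * ((0 - 1) * (1 - x) ^ m)) (at x)"
      by (rule DERIV_power_Suc, rule DERIV_diff, rule DERIV_const, rule DERIV_ident)
    then show ?thesis using 1 unfolding Bernstein_def by simp
  next
    case 2
    obtain r where r: "m = Suc (j + r)" using 2 by (metis add_Suc_right less_iff_Suc_add)
    have e1: "real (Suc m choose Suc j) * real (Suc j) = real (Suc m) * real (m choose j)"
      by (metis binomial_absorption diff_Suc_1 mult.commute of_nat_mult)
    have e2: "real (Suc m choose Suc j) * real (Suc r) = real (Suc m) * real (m choose Suc j)"
    proof -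
      have "(Suc m - Suc j) * (Suc m choose Suc j) = Suc m * ((Suc m - 1) choose Suc j)"
        by (rule binomial_absorb_comp)
      moreover have "Suc m - Suc j = Suc r" using r by simp
      ultimately show ?thesis by (metis diff_Suc_1 mult.commute of_nat_mult)
    qed
    have d1: "((\<lambda>x. x ^ Suc j) has_real_derivative real (Suc j) * x ^ j) (at x)"
      using DERIV_pow[of "Suc j" x] by simp
    have d2': "((\<lambda>x. (1 - x) ^ Suc r) has_real_derivative (1 + real r) * ((0 - 1) * (1 - x) ^ r)) (at x)"
      by (rule DERIV_power_Suc, rule DERIV_diff, rule DERIV_const, rule DERIV_ident)
    have d2: "((\<lambda>x. (1 - x) ^ Suc r) has_real_derivative real (Suc r) * (1 - x) ^ r * (0 - 1)) (at x)"
      using d2' by (simp add: algebra_simps)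
    have d3: "((\<lambda>x. real (Suc m choose Suc j) * (x ^ Suc j * (1 - x) ^ Suc r)) has_real_derivative
       real (Suc m choose Suc j) * (x ^ Suc j * (real (Suc r) * (1 - x) ^ r * (0 - 1)) + real (Suc j) * x ^ j * (1 - x) ^ Suc r)) (at x)"
      by (rule DERIV_cmult, rule DERIV_mult'[OF d1 d2])
    have eq: "real (Suc m choose Suc j) * (x ^ Suc j * (real (Suc r) * (1 - x) ^ r * (0 - 1)) + real (Suc j) * x ^ j * (1 - x) ^ Suc r)
      = real (Suc m) * (real (m choose j) * x ^ j * (1 - x) ^ Suc r - real (m choose Suc j) * x ^ Suc j * (1 - x) ^ r)"
    proof -
      have "real (Suc m choose Suc j) * (x ^ Suc j * (real (Suc r) * (1 - x) ^ r * (0 - 1)) + real (Suc j) * x ^ j * (1 - x) ^ Suc r)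
        = (real (Suc m choose Suc j) * real (Suc j)) * (x ^ j * (1 - x) ^ Suc r) - (real (Suc m choose Suc j) * real (Suc r)) * (x ^ Suc j * (1 - x) ^ r)"
        by (simp add: algebra_simps)
      also have "... = real (Suc m) * (real (m choose j) * x ^ j * (1 - x) ^ Suc r - real (m choose Suc j) * x ^ Suc j * (1 - x) ^ r)"
        unfolding e1 e2 by (simp add: algebra_simps)
      finally show ?thesis .
    qed
    have "m - j = Suc r" "Suc m - Suc j = Suc r" "m - Suc j = r" using r by auto
    then show ?thesis using 2 d3 unfolding Bernstein_def eq by (simp add: mult.assoc)
  next
    case 3
    have "((\<lambda>x. x ^ Suc m) has_real_derivative real (Suc m) * x ^ m) (at x)"
      using DERIV_pow[of "Suc m" x] by simp
    then show ?thesis using 3 unfolding Bernstein_def by simp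
  qed
qed

lemma Bernstein_sum_deriv:
  "((\<lambda>x. \<Sum>k\<le>Suc m. a k * Bernstein (Suc m) k x) has_real_derivative
     (\<Sum>k\<le>m. real (Suc m) * (a (Suc k) - a k) * Bernstein m k x)) (at x)"
proof -
  define A where "A k = (if 1 \<le> k then Bernstein m (k-1) x else 0)" for k
  define B where "B k = (if k \<le> m then Bernstein m k x else 0)" for k
  have "((\<lambda>x. \<Sum>k\<le>Suc m. a k * Bernstein (Suc m) k x) has_real_derivative
     (\<Sum>k\<le>Suc m. a k * (real (Suc m) * (A k - B k)))) (at x)"
  proof (rule DERIV_sum)
    fix k assume "k \<in> {..Suc m}"
    then have "(Bernstein (Suc m) k has_real_derivative real (Suc m) * (A k - B k)) (at x)"
      unfolding A_def B_def using Bernstein_deriv[of k m x] by simp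
    then show "((\<lambda>x. a k * Bernstein (Suc m) k x) has_real_derivative a k * (real (Suc m) * (A k - B k))) (at x)"
      by (rule DERIV_cmult)
  qed
  moreover have "(\<Sum>k\<le>Suc m. a k * (real (Suc m) * (A k - B k)))
     = (\<Sum>k\<le>m. real (Suc m) * (a (Suc k) - a k) * Bernstein m k x)"
  proof -
    have s1: "(\<Sum>k\<le>Suc m. a k * A k) = (\<Sum>k\<le>m. a (Suc k) * Bernstein m k x)"
      unfolding A_def by (subst sum.atMost_Suc_shift) simp
    have s2: "(\<Sum>k\<le>Suc m. a k * B k) = (\<Sum>k\<le>m. a k * Bernstein m k x)"
      unfolding B_def by (subst sum.atMost_Suc) (auto intro!: sum.cong)
    have pw: "a k * (real (Suc m) * (A k - B k)) = real (Suc m) * (a k * A k) - real (Suc m) * (a k * B k)" for k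
      by (simp add: right_diff_distrib)
    have pw2: "real (Suc m) * (a (Suc k) - a k) * Bernstein m k x = real (Suc m) * (a (Suc k) * Bernstein m k x) - real (Suc m) * (a k * Bernstein m k x)" for k
      by (simp add: left_diff_distrib right_diff_distrib)
    have "(\<Sum>k\<le>Suc m. a k * (real (Suc m) * (A k - B k)))
        = real (Suc m) * (\<Sum>k\<le>Suc m. a k * A k) - real (Suc m) * (\<Sum>k\<le>Suc m. a k * B k)"
      unfolding pw sum_subtractf sum_distrib_left ..
    also have "... = (\<Sum>k\<le>m. real (Suc m) * (a (Suc k) - a k) * Bernstein m k x)"
      unfolding s1 s2 pw2 sum_subtractf sum_distrib_left ..
    finally show ?thesis .
  qed
  ultimately show ?thesis by simp
qed

definition bpoly :: "nat \<Rightarrow> nat \<Rightarrow> real poly" where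
  "bpoly n k = smult (of_nat (n choose k)) ([:0,1:]^k * [:1,-1:]^(n-k))"

lemma poly_bpoly: "poly (bpoly n k) x = Bernstein n k x"
  by (simp add: bpoly_def Bernstein_def)

lemma locally_lipschitz_compact:
  assumes "locally_lipschitz f"
  obtains L where "L-lipschitz_on {a..b} f"
proof -
  have "local_lipschitz {0::real} {a..b} (\<lambda>_. f)"
  proof (rule local_lipschitzI)
    fix t x assume "t \<in> {0::real}" "x \<in> {a..b}"
    obtain e L where e: "e > 0" and L: "\<forall>y\<in>ball x e. \<forall>z\<in>ball x e. \<bar>f y - f z\<bar> \<le> L * \<bar>y - z\<bar>"
      using assms unfolding locally_lipschitz_def by blast
    have "\<bar>L\<bar>-lipschitz_on (cball x (e/2) \<inter> {a..b}) f"
    proof (rule lipschitz_onI)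
      fix y z assume "y \<in> cball x (e/2) \<inter> {a..b}" "z \<in> cball x (e/2) \<inter> {a..b}"
      then have "y \<in> ball x e" "z \<in> ball x e" using e by (auto simp: dist_real_def)
      then have "\<bar>f y - f z\<bar> \<le> L * \<bar>y - z\<bar>" using L by blast
      also have "... \<le> \<bar>L\<bar> * \<bar>y - z\<bar>" by (simp add: mult_right_mono)
      finally show "dist (f y) (f z) \<le> \<bar>L\<bar> * dist y z" by (simp add: dist_real_def)
    qed simp
    then show "\<exists>u>0. \<exists>L. \<forall>t\<in>cball t u \<inter> {0}. L-lipschitz_on (cball x u \<inter> {a..b}) f"
      using e by (intro exI[of _ "e/2"]) auto
  qed
  from local_lipschitz_compact_implies_lipschitz[OF this]
  show ?thesis using that by auto
qed

lemma sum_Bernstein_at0: "(\<Sum>k\<le>n. c k * Bernstein n k 0) = c 0"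
  by (simp add: Bernstein_0 if_distrib cong: if_cong)

lemma sum_Bernstein_at1: "(\<Sum>k\<le>n. c k * Bernstein n k 1) = c n"
proof -
  have "(\<Sum>k\<le>n. c k * Bernstein n k 1) = (\<Sum>k\<le>n. if k = n then c k else 0)"
    by (intro sum.cong) (auto simp: Bernstein_1)
  then show ?thesis by simp
qed

theorem lemma3p2:
  fixes f :: "real \<Rightarrow> real" and phim phip :: real
  assumes "locally_lipschitz f"
    and "phim < 0" and "0 < phip"
    and "f phip = f phim"
    and "\<forall>z\<in>{phim<..<phip}. f z - f phip < 0"
  shows "\<forall>\<kappa>\<in>{f 0<..<f phip}. \<exists>R>0. \<forall>\<delta>\<in>{0<..<\<kappa> - f 0}.
     \<exists>g psim psip. smooth g \<and> psim \<in> {phim<..<phip} \<and> psip \<in> {phim<..<phip}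
       \<and> psim < 0 \<and> 0 < psip
       \<and> g phip = g phim \<and> deriv g phip \<noteq> 0 \<and> deriv g phim \<noteq> 0
       \<and> (\<forall>z\<in>{phim<..<phip}. g z - g phip < 0)
       \<and> g psip = \<kappa> \<and> g psim = \<kappa> \<and> deriv g psip \<noteq> 0 \<and> deriv g psim \<noteq> 0
       \<and> (\<forall>z\<in>{psim<..<psip}. g z - g psip < 0)
       \<and> (\<forall>z\<in>{phim..phip}. \<bar>f z - g z\<bar> < \<delta> \<and> \<bar>deriv g z\<bar> < R)"
proof (intro ballI)
  fix \<kappa> assume \<kappa>: "\<kappa> \<in> {f 0<..<f phip}"
  obtain L where L: "L-lipschitz_on {phim..phip} f"
    using locally_lipschitz_compact[OF assms(1)] by blast
  have L0: "0 \<le> L" using L lipschitz_on_nonneg by blast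
  have fle: "f y \<le> f phip" if "y \<in> {phim..phip}" for y
  proof (cases "y = phim \<or> y = phip")
    case True then show ?thesis using assms(4) by auto
  next
    case False then have "y \<in> {phim<..<phip}" using that by auto
    with assms(5) have "f y - f phip < 0" by blast
    then show ?thesis by simp
  qed
  show "\<exists>R>0. \<forall>\<delta>\<in>{0<..<\<kappa> - f 0}.
     \<exists>g psim psip. smooth g \<and> psim \<in> {phim<..<phip} \<and> psip \<in> {phim<..<phip}
       \<and> psim < 0 \<and> 0 < psip
       \<and> g phip = g phim \<and> deriv g phip \<noteq> 0 \<and> deriv g phim \<noteq> 0
       \<and> (\<forall>z\<in>{phim<..<phip}. g z - g phip < 0)
       \<and> g psip = \<kappa> \<and> g psim = \<kappa> \<and> deriv g psip \<noteq> 0 \<and> deriv g psim \<noteq> 0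
       \<and> (\<forall>z\<in>{psim<..<psip}. g z - g psip < 0)
       \<and> (\<forall>z\<in>{phim..phip}. \<bar>f z - g z\<bar> < \<delta> \<and> \<bar>deriv g z\<bar> < R)"
  proof (intro exI[of _ "L+1"] conjI ballI)
    show "0 < L + 1" using L0 by simp
    fix \<delta> assume \<delta>: "\<delta> \<in> {0<..<\<kappa> - f 0}"
    define d where "d = phip - phim"
    have d0: "d > 0" using assms(2,3) by (simp add: d_def)
    define F where "F x = f (phim + d * x)" for x
    have inX: "phim + d * x \<in> {phim..phip}" if "x \<in> {0..1}" for x
    proof -
      have "d * x \<le> d" using that d0 by (simp add: mult_left_le)
      moreover have "0 \<le> d * x" using that d0 by simp
      ultimately show ?thesis unfolding d_def by simp
    qed
    have inXo: "phim + d * x \<in> {phim<..<phip}" if "x \<in> {0<..<1}" for x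
    proof -
      have "d * x < d" using that d0 by simp
      moreover have "0 < d * x" using that d0 by simp
      ultimately show ?thesis unfolding d_def by simp
    qed
    have contf: "continuous_on {phim..phip} f"
      using L lipschitz_on_continuous_on by blast
    have contF: "continuous_on {0..1} F"
      unfolding F_def
      by (rule continuous_on_compose2[OF contf]) (auto intro!: continuous_intros inX)
    have Flip: "\<bar>F x - F y\<bar> \<le> L * d * \<bar>x - y\<bar>" if "x \<in> {0..1}" "y \<in> {0..1}" for x y
    proof -
      have "dist (f (phim + d * x)) (f (phim + d * y)) \<le> L * dist (phim + d * x) (phim + d * y)"
        using lipschitz_onD[OF L inX[OF that(1)] inX[OF that(2)]] .
      also have "dist (phim + d * x) (phim + d * y) = d * \<bar>x - y\<bar>"
        using d0 by (simp add: dist_real_def abs_mult flip: right_diff_distrib)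
      finally show ?thesis by (simp add: F_def dist_real_def mult.assoc)
    qed
    obtain N where N: "\<And>n x. N \<le> n \<and> x \<in> {0..1} \<Longrightarrow> \<bar>F x - (\<Sum>k\<le>n. F (k/n) * Bernstein n k x)\<bar> < \<delta>/2"
      using Bernstein_Weierstrass[OF contF, of "\<delta>/2"] \<delta> by auto
    define m where "m = max N 1"
    define n where "n = Suc m"
    have m1: "1 \<le> m" and Nn: "N \<le> n" by (auto simp: m_def n_def)
    define a where "a k = F (real k / real n)" for k
    define P where "P x = (\<Sum>k\<le>n. a k * Bernstein n k x)" for x
    define Q where "Q x = (\<Sum>k\<le>m. real n * (a (Suc k) - a k) * Bernstein m k x)" for x
    have Pder: "(P has_real_derivative Q x) (at x)" for x
      unfolding P_def Q_def n_def by (rule Bernstein_sum_deriv)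
    define u where "u z = (z - phim) / d" for z
    define g0 where "g0 z = P (u z)" for z
    have g0der: "(g0 has_real_derivative Q (u z) / d) (at z)" for z
    proof -
      have "(u has_real_derivative 1 / d) (at z)"
        unfolding u_def using d0 by (auto intro!: derivative_eq_intros)
      from DERIV_chain2[OF Pder this] show ?thesis
        unfolding g0_def by (simp add: o_def)
    qed
    define G0 where "G0 = pcompose (\<Sum>k\<le>n. smult (a k) (bpoly n k)) [:-phim/d, 1/d:]"
    have pG0: "poly G0 = g0"
    proof
      fix z show "poly G0 z = g0 z"
        by (simp add: G0_def poly_pcompose poly_sum poly_bpoly g0_def P_def u_def diff_divide_distrib)
    qed
    have pdG0: "poly (pderiv G0) z = Q (u z) / d" for z
      using DERIV_unique[OF poly_DERIV[of G0 z]] g0der[of z] pG0 by simp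
    have a0: "a 0 = f phim" by (simp add: a_def F_def)
    have an: "a n = f phip" using d0 by (simp add: a_def F_def n_def d_def)
    have P0: "P 0 = a 0" by (simp add: P_def sum_Bernstein_at0)
    have P1: "P 1 = a n" by (simp add: P_def sum_Bernstein_at1)
    have Q0: "Q 0 = real n * (a 1 - a 0)" by (simp add: Q_def sum_Bernstein_at0)
    have Q1: "Q 1 = real n * (a n - a m)" by (simp add: Q_def sum_Bernstein_at1 n_def)
    have u0: "u phim = 0" and u1: "u phip = 1" using d0 by (auto simp: u_def d_def)
    have a1: "a 1 < a 0"
    proof -
      have "1 / real n \<in> {0<..<1}" using m1 by (simp add: n_def)
      from assms(5)[rule_format, OF inXo[OF this]]
      have "f (phim + d * (1 / real n)) < f phim" using assms(4) by simp
      moreover have "a 1 = f (phim + d * (1 / real n))" by (simp add: a_def F_def)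
      ultimately show ?thesis using a0 by simp
    qed
    have am: "a m < a n"
    proof -
      have "real m / real n \<in> {0<..<1}" using m1 by (simp add: n_def)
      from assms(5)[rule_format, OF inXo[OF this]]
      have "f (phim + d * (real m / real n)) < f phip" by simp
      moreover have "a m = f (phim + d * (real m / real n))" by (simp add: a_def F_def)
      ultimately show ?thesis using an by simp
    qed
    have Qphim: "Q (u phim) / d \<noteq> 0" using a1 d0 u0 Q0 by (simp add: n_def)
    have Qphip: "Q (u phip) / d \<noteq> 0" using am d0 u1 Q1 by (simp add: n_def)
    have pdG0nz: "pderiv G0 \<noteq> 0" using pdG0[of phim] Qphim by auto
    define C where "C = {z. poly (pderiv G0) z = 0}"
    have finC: "finite C" unfolding C_def by (rule poly_roots_finite[OF pdG0nz])
    define S where "S = (\<lambda>z. \<kappa> - g0 z) ` C"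
    have finS: "finite S" using finC by (simp add: S_def)
    have "infinite ({0<..<\<delta>/2} - S)"
      using \<delta> finS by (intro Diff_infinite_finite) auto
    then obtain t where t: "t \<in> {0<..<\<delta>/2}" "t \<notin> S"
      by (metis Diff_iff ex_in_conv finite.emptyI)
    define g where "g z = g0 z + t" for z
    have gpoly: "g = poly (G0 + [:t:])" by (rule ext) (simp add: g_def pG0)
    have smg: "smooth g" unfolding gpoly by (rule smooth_poly)
    have gder: "(g has_real_derivative Q (u z) / d) (at z)" for z
      unfolding g_def using DERIV_add[OF g0der[of z] DERIV_const[of t]] by simp
    have dg: "deriv g z = Q (u z) / d" for z using DERIV_imp_deriv[OF gder] .
    have contg: "continuous_on A g" for A
      by (meson DERIV_isCont continuous_at_imp_continuous_on gder)
    have gphim: "g phim = f phim + t" using u0 P0 a0 by (simp add: g_def g0_def)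
    have gphip: "g phip = f phip + t" using u1 P1 an by (simp add: g_def g0_def)
    have approx: "\<bar>f z - g z\<bar> < \<delta>" if "z \<in> {phim..phip}" for z
    proof -
      have uz: "u z \<in> {0..1}" using that d0 by (auto simp: u_def d_def field_simps)
      have "F (u z) = f z" using d0 by (simp add: F_def u_def)
      moreover have "\<bar>F (u z) - P (u z)\<bar> < \<delta>/2"
        using N[of n "u z"] Nn uz by (simp add: P_def a_def)
      ultimately have "\<bar>f z - P (u z)\<bar> < \<delta>/2" by simp
      then show ?thesis using t unfolding g_def g0_def abs_less_iff by auto
    qed
    have Qbound: "\<bar>Q x\<bar> \<le> L * d" if "x \<in> {0..1}" for x
    proof -
      have "\<bar>Q x\<bar> \<le> (\<Sum>k\<le>m. \<bar>real n * (a (Suc k) - a k) * Bernstein m k x\<bar>)"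
        unfolding Q_def by (rule sum_abs)
      also have "... \<le> (\<Sum>k\<le>m. (L * d) * Bernstein m k x)"
      proof (rule sum_mono)
        fix k assume k: "k \<in> {..m}"
        have B: "0 \<le> Bernstein m k x" using that by (simp add: Bernstein_nonneg)
        have i1: "real (Suc k) / real n \<in> {0..1}" "real k / real n \<in> {0..1}"
          using k by (auto simp: n_def)
        have "\<bar>a (Suc k) - a k\<bar> \<le> L * d * \<bar>real (Suc k) / real n - real k / real n\<bar>"
          unfolding a_def by (rule Flip[OF i1])
        also have "... = L * d / real n" by (simp add: n_def diff_divide_distrib[symmetric])
        finally have "real n * \<bar>a (Suc k) - a k\<bar> \<le> L * d"
          by (simp add: n_def field_simps)
        then show "\<bar>real n * (a (Suc k) - a k) * Bernstein m k x\<bar> \<le> (L * d) * Bernstein m k x"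
          using B by (simp add: abs_mult mult_right_mono)
      qed
      also have "... = L * d" by (simp flip: sum_distrib_left)
      finally show ?thesis .
    qed
    have dbound: "\<bar>deriv g z\<bar> < L + 1" if "z \<in> {phim..phip}" for z
    proof -
      have uz: "u z \<in> {0..1}" using that d0 by (auto simp: u_def d_def field_simps)
      have "\<bar>deriv g z\<bar> = \<bar>Q (u z)\<bar> / d" using d0 by (simp add: dg)
      also have "... \<le> L" using Qbound[OF uz] d0 by (simp add: field_simps)
      finally show ?thesis by simp
    qed
    have interior: "g z - g phip < 0" if "z \<in> {phim<..<phip}" for z
    proof -
      define x where "x = u z"
      have x: "x \<in> {0<..<1}" using that d0 by (auto simp: x_def u_def d_def field_simps)
      have "a 0 - P x = (\<Sum>k\<le>n. (a 0 - a k) * Bernstein n k x)"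
      proof -
        have "a 0 = (\<Sum>k\<le>n. a 0 * Bernstein n k x)" by (simp flip: sum_distrib_left)
        then show ?thesis by (simp add: P_def algebra_simps sum_subtractf)
      qed
      also have "... > 0"
      proof (rule sum_pos2[of _ 1])
        show "1 \<in> {..n}" by (simp add: n_def)
        show "0 < (a 0 - a 1) * Bernstein n 1 x"
          using a1 x by (simp add: Bernstein_pos n_def)
        fix k assume k: "k \<in> {..n}"
        have "real k / real n \<in> {0..1}" using k by (auto simp: n_def)
        then have "f (phim + d * (real k / real n)) \<le> f phip" using fle inX by blast
        moreover have "a k = f (phim + d * (real k / real n))" by (simp add: a_def F_def)
        ultimately have "a k \<le> a 0" using a0 assms(4) by simp
        then show "0 \<le> (a 0 - a k) * Bernstein n k x" using x by (simp add: Bernstein_nonneg)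
      qed simp
      finally have "P x < a 0" by simp
      then show ?thesis using gphip an a0 assms(4) by (simp add: g_def g0_def x_def)
    qed
    have g0lt: "g 0 < \<kappa>"
      using approx[of 0] assms(2,3) \<delta> by auto
    have gphip_gt: "\<kappa> < g phip" using gphip \<kappa> t by auto
    have gphim_gt: "\<kappa> < g phim" using gphim assms(4) \<kappa> t by auto
    define H where "H = G0 + [:t - \<kappa>:]"
    have pH: "poly H z = g z - \<kappa>" for z by (simp add: H_def pG0 g_def)
    have Hnz: "H \<noteq> 0" using pH[of 0] g0lt by auto
    have finK: "finite {z. g z = \<kappa>}"
      using poly_roots_finite[OF Hnz] by (rule finite_subset[rotated]) (auto simp: pH)
    define Ap where "Ap = {z \<in> {0..phip}. g z = \<kappa>}"
    define Am where "Am = {z \<in> {phim..0}. g z = \<kappa>}"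
    have finAp: "finite Ap" using finK by (rule finite_subset[rotated]) (auto simp: Ap_def)
    have finAm: "finite Am" using finK by (rule finite_subset[rotated]) (auto simp: Am_def)
    have Apne: "Ap \<noteq> {}"
    proof -
      obtain x where "0 \<le> x" "x \<le> phip" "g x = \<kappa>"
        using IVT'[of g 0 \<kappa> phip] g0lt gphip_gt assms(3) contg by fastforce
      then show ?thesis by (auto simp: Ap_def)
    qed
    have Amne: "Am \<noteq> {}"
    proof -
      obtain x where "phim \<le> x" "x \<le> 0" "g x = \<kappa>"
        using IVT2'[of g 0 \<kappa> phim] g0lt gphim_gt assms(2) contg by fastforce
      then show ?thesis by (auto simp: Am_def)
    qed
    define psip where "psip = Min Ap"
    define psim where "psim = Max Am"
    have psipA: "psip \<in> Ap" unfolding psip_def using finAp Apne by (rule Min_in)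
    have psimA: "psim \<in> Am" unfolding psim_def using finAm Amne by (rule Max_in)
    have gpsip: "g psip = \<kappa>" and gpsim: "g psim = \<kappa>" using psipA psimA by (auto simp: Ap_def Am_def)
    have psip_pos: "0 < psip"
      using psipA g0lt by (cases "psip = 0") (auto simp: Ap_def)
    have psip_lt: "psip < phip"
      using psipA gphip_gt by (cases "psip = phip") (auto simp: Ap_def)
    have psim_neg: "psim < 0"
      using psimA g0lt by (cases "psim = 0") (auto simp: Am_def)
    have psim_gt: "phim < psim"
      using psimA gphim_gt by (cases "psim = phim") (auto simp: Am_def)
    have nocrit: "deriv g z \<noteq> 0" if "g z = \<kappa>" for z
    proof
      assume "deriv g z = 0"
      then have "z \<in> C" using pdG0[of z] dg[of z] by (simp add: C_def)
      then have "\<kappa> - g0 z \<in> S" by (simp add: S_def)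
      moreover have "\<kappa> - g0 z = t" using that by (simp add: g_def)
      ultimately show False using t by simp
    qed
    have inner: "g z - g psip < 0" if z: "z \<in> {psim<..<psip}" for z
    proof (rule ccontr)
      assume "\<not> g z - g psip < 0"
      then have ge: "\<kappa> \<le> g z" using gpsip by simp
      show False
      proof (cases "0 \<le> z")
        case True
        obtain x where x: "0 \<le> x" "x \<le> z" "g x = \<kappa>"
          using IVT'[of g 0 \<kappa> z] g0lt ge True contg by fastforce
        then have "x \<in> Ap" using z psip_lt by (auto simp: Ap_def)
        then have "psip \<le> x" unfolding psip_def using finAp by (simp add: Min_le)
        then show False using x z by simp
      next
        case False
        obtain x where x: "z \<le> x" "x \<le> 0" "g x = \<kappa>"
          using IVT2'[of g 0 \<kappa> z] g0lt ge False contg by fastforce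
        then have "x \<in> Am" using z psim_gt by (auto simp: Am_def)
        then have "x \<le> psim" unfolding psim_def using finAm by (simp add: Max_ge)
        then show False using x z by simp
      qed
    qed
    show "\<exists>g psim psip. smooth g \<and> psim \<in> {phim<..<phip} \<and> psip \<in> {phim<..<phip}
       \<and> psim < 0 \<and> 0 < psip
       \<and> g phip = g phim \<and> deriv g phip \<noteq> 0 \<and> deriv g phim \<noteq> 0
       \<and> (\<forall>z\<in>{phim<..<phip}. g z - g phip < 0)
       \<and> g psip = \<kappa> \<and> g psim = \<kappa> \<and> deriv g psip \<noteq> 0 \<and> deriv g psim \<noteq> 0
       \<and> (\<forall>z\<in>{psim<..<psip}. g z - g psip < 0)
       \<and> (\<forall>z\<in>{phim..phip}. \<bar>f z - g z\<bar> < \<delta> \<and> \<bar>deriv g z\<bar> < L + 1)"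
      apply (rule exI[of _ g], rule exI[of _ psim], rule exI[of _ psip])
      using smg psim_gt psim_neg psip_pos psip_lt assms(2,3) gphip gphim assms(4)
        dg[of phip] dg[of phim] Qphip Qphim interior gpsip gpsim nocrit inner approx dbound
      by auto
  qed
qed

end
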